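(* The free semigroup of rank 1 with a zero adjoined, i.e. the semigroup with presentation $\langle a,b\mid b^2=b,\ ab=ba=b\rangle$, is not isomorphic to any automaton semigroup.
   Context: A synchronous automaton is $(Q,\Sigma,t,o)$ with $Q$ a finite set of states, $\Sigma$ a finite alphabet, $t:Q\times\Sigma\to Q$ and $o:Q\times\Sigma\to\Sigma$. Each state $q$ induces $q:\Sigma^*\to\Sigma^*$ by $q(\emptyset)=\emptyset$, $q(\sigma w)=o(q,\sigma)\,q'(w)$ with $q'=t(q,\sigma)$. An automaton semigroup is the semigroup of maps generated under composition by the states of a synchronous automaton. *)

theory Defs
  imports Main
begin

text \<open>A synchronous automaton with finite state set Q = UNIV :: 'q and finite alphabet
  Sigma = UNIV :: 's, transition function t and output function out.\<close>

fun state_map :: "('q \<Rightarrow> 's \<Rightarrow> 'q) \<Rightarrow> ('q \<Rightarrow> 's \<Rightarrow> 's) \<Rightarrow> 'q \<Rightarrow> 's list \<Rightarrow> 's list" where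
  "state_map t out q [] = []"
| "state_map t out q (s # w) = out q s # state_map t out (t q s) w"

inductive_set aut_semigroup :: "('q \<Rightarrow> 's \<Rightarrow> 'q) \<Rightarrow> ('q \<Rightarrow> 's \<Rightarrow> 's) \<Rightarrow> ('s list \<Rightarrow> 's list) set"
  for t out where
  gen: "state_map t out q \<in> aut_semigroup t out"
| comp: "f \<in> aut_semigroup t out \<Longrightarrow> g \<in> aut_semigroup t out \<Longrightarrow> f \<circ> g \<in> aut_semigroup t out"

text \<open>The free semigroup of rank 1 with a zero adjoined, i.e. the semigroup
  presented by a, b with b^2 = b, ab = ba = b. Normal forms: Some n stands for a^n (n \<ge> 1),
  None stands for the zero b.\<close>

definition fz_carrier :: "nat option set" where
  "fz_carrier = {None} \<union> {Some n | n. n \<ge> 1}"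

fun fz_mult :: "nat option \<Rightarrow> nat option \<Rightarrow> nat option" where
  "fz_mult (Some m) (Some n) = Some (m + n)"
| "fz_mult _ _ = None"

end

theory Submission
  imports Defs
begin

lemma funpow_period:
  fixes f :: "'a::finite \<Rightarrow> 'a"
  shows "\<exists>N\<ge>1. f^^(2*N) = f^^N \<and> (\<forall>n. \<exists>m<N. f^^n = f^^m)"
proof -
  have "finite (range (\<lambda>n::nat. f^^n))" by simp
  hence "\<not> inj (\<lambda>n::nat. f^^n)" using finite_imageD by blast
  then obtain i j where ij: "i \<noteq> j" "f^^i = f^^j" unfolding inj_def by blast
  obtain i j where ij: "i < j" "f^^i = f^^j"
    using ij by (metis linorder_neqE_nat)
  define p where "p = j - i"
  have p1: "p \<ge> 1" using ij p_def by simp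
  have per: "f^^(n+p) = f^^n" if "n \<ge> i" for n
  proof -
    have "f^^(n+p) = f^^(n-i) \<circ> f^^(i+p)" using that by (simp add: funpow_add[symmetric])
    also have "i + p = j" using ij p_def by simp
    also have "f^^(n-i) \<circ> f^^j = f^^(n-i) \<circ> f^^i" using ij by simp
    also have "\<dots> = f^^n" using that by (simp add: funpow_add[symmetric])
    finally show ?thesis .
  qed
  have perk: "f^^(n + k*p) = f^^n" if "n \<ge> i" for n k
  proof (induction k)
    case 0 then show ?case by simp
  next
    case (Suc k)
    have "f^^(n + Suc k * p) = f^^((n + k*p) + p)" by (simp add: algebra_simps)
    also have "\<dots> = f^^(n + k*p)" using per that by simp
    finally show ?case using Suc by simp
  qed
  define N where "N = p * (i+1)"
  have N1: "N \<ge> 1" using p1 N_def by simp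
  have Ni: "N \<ge> i + p" using p1 N_def by (simp add: algebra_simps)
  have e2: "2*N = N + (i+1)*p" using N_def by (simp add: algebra_simps)
  have "f^^(2*N) = f^^(N + (i+1)*p)" by (subst e2) (rule refl)
  also have "\<dots> = f^^N" using perk[of N "i+1"] Ni by simp
  finally have A: "f^^(2*N) = f^^N" .
  have B: "\<exists>m<N. f^^n = f^^m" for n
  proof (cases "n < N")
    case True then show ?thesis by blast
  next
    case False
    define m where "m = i + (n-i) mod p"
    have "n = m + ((n-i) div p) * p" using False Ni m_def
      by (metis add.commute add_diff_inverse_nat div_mod_decomp group_cancel.add1 le_add1 le_trans linorder_not_le)
    hence "f^^n = f^^m" using perk[of m "(n-i) div p"] m_def by simp
    moreover have "m < N" using m_def p1 Ni by (metis add_less_cancel_left mod_less_divisor order_less_le_trans zero_less_one less_le_trans)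
    ultimately show ?thesis by blast
  qed
  show ?thesis using N1 A B by blast
qed

lemma fz_mem: "Some n \<in> fz_carrier \<longleftrightarrow> n \<ge> 1" "None \<in> fz_carrier"
  by (auto simp: fz_carrier_def)

lemma aut_nil: "f \<in> aut_semigroup t out \<Longrightarrow> f [] = []"
  by (induction rule: aut_semigroup.induct) auto

locale fzi =
  fixes t :: "'q::finite \<Rightarrow> 's::finite \<Rightarrow> 'q" and out :: "'q \<Rightarrow> 's \<Rightarrow> 's"
    and h :: "nat option \<Rightarrow> 's list \<Rightarrow> 's list"
  assumes bij: "bij_betw h fz_carrier (aut_semigroup t out)"
  and hom: "\<forall>x\<in>fz_carrier. \<forall>y\<in>fz_carrier. h (fz_mult x y) = h x \<circ> h y"
begin

lemma inS: "x \<in> fz_carrier \<Longrightarrow> h x \<in> aut_semigroup t out"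
  using bij unfolding bij_betw_def by blast
lemma surjS: "f \<in> aut_semigroup t out \<Longrightarrow> \<exists>x\<in>fz_carrier. f = h x"
  using bij unfolding bij_betw_def by auto
lemma injS: "x\<in>fz_carrier \<Longrightarrow> y\<in>fz_carrier \<Longrightarrow> h x = h y \<Longrightarrow> x = y"
  using bij unfolding bij_betw_def inj_on_def by blast
lemma homS: "x\<in>fz_carrier \<Longrightarrow> y \<in> fz_carrier \<Longrightarrow> h (fz_mult x y) = h x \<circ> h y"
  using hom by blast

lemma carrier_cases: "x \<in> fz_carrier \<Longrightarrow> x = None \<or> (\<exists>e. x = Some e \<and> e \<ge> 1)"
  by (auto simp: fz_carrier_def)

lemma A_state: "\<exists>q. state_map t out q = h (Some 1)"
proof -
  have "f \<in> aut_semigroup t out \<Longrightarrow> f = h (Some 1) \<Longrightarrow> \<exists>q. state_map t out q = f" for f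
  proof (induction rule: aut_semigroup.induct)
    case (gen q) then show ?case by blast
  next
    case (comp f g)
    obtain x where x: "x \<in> fz_carrier" "f = h x" using surjS comp by blast
    obtain y where y: "y \<in> fz_carrier" "g = h y" using surjS comp by blast
    have "h (fz_mult x y) = h (Some 1)" using homS[OF x(1) y(1)] x y comp by (simp add: o_def)
    moreover have "fz_mult x y \<in> fz_carrier" using x y by (cases x; cases y; auto simp: fz_carrier_def)
    ultimately have "fz_mult x y = Some 1" using injS fz_mem by blast
    then show ?case using x y by (cases x; cases y; auto simp: fz_carrier_def)
  qed
  then show ?thesis using inS[of "Some 1"] by (auto simp: fz_carrier_def)
qed

lemma sec1: "\<exists>c x. (x = None \<or> (\<exists>e. x = Some e \<and> e \<ge> 1)) \<and> (\<forall>u. h (Some 1) (s#u) = c # h x u)"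
proof -
  obtain q where q: "state_map t out q = h (Some 1)" using A_state by blast
  obtain x where x: "x\<in>fz_carrier" "state_map t out (t q s) = h x"
    using surjS[OF aut_semigroup.gen] by blast
  have "\<forall>u. h (Some 1) (s#u) = out q s # h x u" by (metis q x(2) state_map.simps(2))
  then show ?thesis using carrier_cases[OF x(1)] by blast
qed

lemma sec_mono: "n \<ge> 1 \<Longrightarrow> \<exists>c x. (x = None \<or> (\<exists>e. x = Some e \<and> e \<ge> n)) \<and> (\<forall>u. h (Some n) (s#u) = c # h x u)"
proof (induction n arbitrary: s rule: nat_induct_at_least)
  case base then show ?case using sec1 by blast
next
  case (Suc n)
  obtain c x where cx: "x = None \<or> (\<exists>e. x = Some e \<and> e \<ge> n)" "\<forall>u. h (Some n) (s#u) = c # h x u"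
    using Suc.IH by blast
  obtain c' x' where cx': "x' = None \<or> (\<exists>e. x' = Some e \<and> e \<ge> 1)" "\<forall>v. h (Some 1) (c#v) = c' # h x' v"
    using sec1 by blast
  have hs: "h (Some (Suc n)) = h (Some 1) \<circ> h (Some n)" using homS[of "Some 1" "Some n"] Suc.hyps
    by (simp add: fz_carrier_def)
  have xc: "x \<in> fz_carrier" "x' \<in> fz_carrier" using cx(1) cx'(1) Suc.hyps by (auto simp: fz_carrier_def)
  have "\<forall>u. h (Some (Suc n)) (s#u) = c' # h (fz_mult x' x) u"
    using hs cx(2) cx'(2) homS[OF xc(2) xc(1)] by simp
  moreover have "fz_mult x' x = None \<or> (\<exists>e. fz_mult x' x = Some e \<and> e \<ge> Suc n)"
    using cx(1) cx'(1) by auto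
  ultimately show ?case by blast
qed

lemma no_iso: False
proof -
  define E where "E = {e::nat. e \<ge> 1 \<and> (\<exists>q. state_map t out q = h (Some e))}"
  have injE: "inj_on (\<lambda>e. h (Some e)) E"
    unfolding inj_on_def E_def using injS fz_mem by blast
  have "(\<lambda>e. h (Some e)) ` E \<subseteq> range (state_map t out)" unfolding E_def by (auto, metis rangeI)
  moreover have "finite (range (state_map t out))" by simp
  ultimately have finE: "finite E" using injE inj_on_finite by blast
  obtain qa where "state_map t out qa = h (Some 1)" using A_state by blast
  hence "1 \<in> E" unfolding E_def by blast
  define M where "M = Max E"
  have ME: "M \<in> E" using finE \<open>1 \<in> E\<close> M_def by (metis Max_in empty_iff)
  have Mmax: "e \<in> E \<Longrightarrow> e \<le> M" for e using finE M_def by simp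
  have M1: "M \<ge> 1" using ME E_def by simp
  obtain qM where qM: "state_map t out qM = h (Some M)" using ME E_def by blast
  have secM: "state_map t out (t qM s) = h None \<or> state_map t out (t qM s) = h (Some M)" for s
  proof -
    obtain c x where cx: "x = None \<or> (\<exists>e. x = Some e \<and> e \<ge> M)" "\<forall>u. h (Some M) (s#u) = c # h x u"
      using sec_mono[OF M1] by blast
    have "\<forall>u. state_map t out (t qM s) u = h x u"
    proof
      fix u
      have "out qM s # state_map t out (t qM s) u = c # h x u" using cx(2) qM
        by (metis state_map.simps(2))
      then show "state_map t out (t qM s) u = h x u" by simp
    qed
    hence eq: "state_map t out (t qM s) = h x" by blast
    show ?thesis
    proof (cases x)
      case None then show ?thesis using eq by simp
    next
      case (Some e)
      then have "e \<ge> M" using cx(1) by auto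
      hence "e \<in> E" using eq Some M1 E_def by auto
      hence "e = M" using Mmax \<open>e \<ge> M\<close> by (simp add: le_antisym)
      then show ?thesis using eq Some by simp
    qed
  qed
  define bb where "bb = out qM"
  define K where "K = {s. state_map t out (t qM s) = h None}"
  define P where "P n = h (Some (M * n))" for n
  have ZZ: "h None (h None u) = h None u" for u
    using homS[of None None] fz_mem by (metis comp_apply fz_mult.simps(2))
  have ZP: "k \<ge> 1 \<Longrightarrow> h None (h (Some k) u) = h None u" for k u
    using homS[of None "Some k"] fz_mem by (metis comp_apply fz_mult.simps(2))
  have PZ: "h (Some M) (h None u) = h None u" for u
    using homS[of "Some M" None] fz_mem M1 by (metis comp_apply fz_mult.simps(3))
  have step1: "h (Some M) (c#v) = bb c # (if c \<in> K then h None v else h (Some M) v)" for c v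
  proof -
    have "h (Some M) (c#v) = bb c # state_map t out (t qM c) v"
      using qM bb_def by (metis state_map.simps(2))
    then show ?thesis using secM[of c] K_def by auto
  qed
  have iter: "\<forall>s u. P n (s#u) = (bb^^n) s # (if \<exists>i<n. (bb^^i) s \<in> K then h None u else P n u)"
    if "n \<ge> 1" for n
    using that
  proof (induction n rule: nat_induct_at_least)
    case base
    show ?case
    proof (intro allI)
      fix s u
      have "P 1 (s#u) = bb s # state_map t out (t qM s) u"
        using qM P_def bb_def by (metis mult_1_right state_map.simps(2))
      then show "P 1 (s#u) = (bb^^1) s # (if \<exists>i<1. (bb^^i) s \<in> K then h None u else P 1 u)"
        using secM[of s] K_def P_def by auto
    qed
  next
    case (Suc n)
    have hs: "P (Suc n) = h (Some M) \<circ> P n" using homS[of "Some M" "Some (M*n)"] Suc.hyps M1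
      unfolding P_def by (simp add: fz_carrier_def)
    show ?case
    proof (intro allI)
      fix s u
      have pn: "P n u = h (Some (M*n)) u" using P_def by simp
      have Mn: "M * n \<ge> 1" using M1 Suc.hyps by simp
      have "P (Suc n) (s#u) = h (Some M) ((bb^^n) s # (if \<exists>i<n. (bb^^i) s \<in> K then h None u else P n u))"
        using hs Suc.IH by simp
      also have "\<dots> = bb ((bb^^n) s) # (if (bb^^n) s \<in> K then h None 
                   (if \<exists>i<n. (bb^^i) s \<in> K then h None u else P n u) else h (Some M)
                   (if \<exists>i<n. (bb^^i) s \<in> K then h None u else P n u))"
        by (rule step1)
      also have "\<dots> = (bb^^Suc n) s # (if \<exists>i<Suc n. (bb^^i) s \<in> K then h None u else P (Suc n) u)"
        using ZZ ZP[OF Mn] PZ hs pn P_def less_Suc_eq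
        by (auto simp: less_Suc_eq)
      finally show "P (Suc n) (s#u) = (bb^^Suc n) s # (if \<exists>i<Suc n. (bb^^i) s \<in> K then h None u else P (Suc n) u)" .
    qed
  qed
  obtain N where N: "N \<ge> 1" "bb^^(2*N) = bb^^N" "\<forall>n. \<exists>m<N. bb^^n = bb^^m"
    using funpow_period[of bb] by blast
  have cond: "(\<exists>i<N. (bb^^i) s \<in> K) \<longleftrightarrow> (\<exists>i<2*N. (bb^^i) s \<in> K)" for s
    using N(3) by (metis less_trans_Suc mult_2 trans_less_add1 less_add_same_cancel1 N(1) less_le_trans zero_less_one)
  have eqw: "P N w = P (2*N) w" for w
  proof (induction w)
    case Nil
    have mn: "M*N \<ge> 1" "M*(2*N) \<ge> 1" using M1 N(1) by auto
    have a: "h (Some (M*N)) [] = []" "h (Some (M*(2*N))) [] = []"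
      using aut_nil[OF inS] mn fz_mem by auto
    show ?case using a P_def by simp
  next
    case (Cons s u)
    show ?case using iter[of N] iter[of "2*N"] N(1) N(2) cond[of s] Cons by auto
  qed
  hence "h (Some (M*N)) = h (Some (M*(2*N)))" using P_def by auto
  moreover have "Some (M*N) \<in> fz_carrier" "Some (M*(2*N)) \<in> fz_carrier" using fz_mem M1 N(1) by auto
  ultimately have "Some (M*N) = Some (M*(2*N))" using injS by blast
  hence "M*N = M*(2*N)" by simp
  then show False using M1 N(1) by simp
qed

end

theorem mainTheorem14:
  fixes t :: "'q::finite \<Rightarrow> 's::finite \<Rightarrow> 'q" and out :: "'q \<Rightarrow> 's \<Rightarrow> 's"
  shows "\<not> (\<exists>h. bij_betw h fz_carrier (aut_semigroup t out) \<and>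
              (\<forall>x\<in>fz_carrier. \<forall>y\<in>fz_carrier. h (fz_mult x y) = h x \<circ> h y))"
proof
  assume "\<exists>h. bij_betw h fz_carrier (aut_semigroup t out) \<and>
              (\<forall>x\<in>fz_carrier. \<forall>y\<in>fz_carrier. h (fz_mult x y) = h x \<circ> h y)"
  then obtain h where "bij_betw h fz_carrier (aut_semigroup t out)"
    "\<forall>x\<in>fz_carrier. \<forall>y\<in>fz_carrier. h (fz_mult x y) = h x \<circ> h y" by blast
  then interpret fzi t out h by unfold_locales
  show False by (rule no_iso)
qed

end
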